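(* Let $\mathcal{X}$ be a finite set, $\mathcal{Y}$ a set with two elements, and $(X,Y)$ random variables on $\mathcal{X}\times\mathcal{Y}$ with joint distribution $P_{X,Y}$ which are not independent, so that $P_{X,Y}(x,y) = P_X(x)P_Y(y)\left(1+\varrho f^*(x)g^*(y)\right)$ for some $\varrho>0$, $f^*\in\mathcal{F}_{\mathcal{X}}$, $g^*:\mathcal{Y}\to\mathbb{R}$ with $\mathbb{E}[f^*(X)^2]=\mathbb{E}[g^*(Y)^2]=1$. Then for each (nonzero, finite-dimensional) subspace $\mathcal{G}$ of $\mathcal{F}_{\mathcal{X}}$, $$\mathrm{H}(\mathcal{G}) = \frac{\varrho^2}{2}\left\|\Pi(f^*;\mathcal{G})\right\|^2 = \max_{f\in\mathcal{G}}\mathrm{H}(f) = \mathrm{H}(\Pi(f^*;\mathcal{G})),$$ where the maximum is over (nonzero) one-dimensional features $f\in\mathcal{G}$.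
   Context: $\mathcal{F}_{\mathcal{X}}$ is the space of functions $\mathcal{X}\to\mathbb{R}$ with inner product $\langle f_1,f_2\rangle=\mathbb{E}_{P_X}[f_1(X)f_2(X)]$ and norm $\|f\|=\sqrt{\langle f,f\rangle}$; $\Pi(f;\mathcal{G}) = \arg\min_{h\in\mathcal{G}}\|h-f\|$. For $f:\mathcal{X}\to\mathbb{R}^d$, $\Lambda_f = \mathbb{E}[f(X)f^{\mathrm{T}}(X)]$, $\tilde f(x)=f(x)-\mathbb{E}[f(X)]$, and the H-score (for nonsingular $\Lambda_f$) is $\mathrm{H}(f) = \frac12\mathbb{E}\left[\left\|\mathbb{E}[\Lambda_f^{-1/2}\tilde f(X)\mid Y]\right\|^2\right]$. For a subspace $\mathcal{G}$, $\mathrm{H}(\mathcal{G})$ denotes $\mathrm{H}(f)$ for any $f$ whose components form a basis of $\mathcal{G}$; this does not depend on the choice of basis. *)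

theory Defs
  imports "HOL-Analysis.Analysis" "Jordan_Normal_Form.Gauss_Jordan_Elimination" "HOL-Library.Function_Algebras"
begin

definition margX :: "('x::finite \<Rightarrow> 'y::finite \<Rightarrow> real) \<Rightarrow> 'x \<Rightarrow> real" where
  "margX P x = (\<Sum>y\<in>UNIV. P x y)"

definition margY :: "('x::finite \<Rightarrow> 'y::finite \<Rightarrow> real) \<Rightarrow> 'y \<Rightarrow> real" where
  "margY P y = (\<Sum>x\<in>UNIV. P x y)"

definition ExpX :: "('x::finite \<Rightarrow> 'y::finite \<Rightarrow> real) \<Rightarrow> ('x \<Rightarrow> real) \<Rightarrow> real" where
  "ExpX P f = (\<Sum>x\<in>UNIV. margX P x * f x)"

definition ExpY :: "('x::finite \<Rightarrow> 'y::finite \<Rightarrow> real) \<Rightarrow> ('y \<Rightarrow> real) \<Rightarrow> real" where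
  "ExpY P g = (\<Sum>y\<in>UNIV. margY P y * g y)"

definition condE :: "('x::finite \<Rightarrow> 'y::finite \<Rightarrow> real) \<Rightarrow> ('x \<Rightarrow> real) \<Rightarrow> 'y \<Rightarrow> real" where
  "condE P f y = (\<Sum>x\<in>UNIV. P x y * f x) / margY P y"

definition innerP :: "('x::finite \<Rightarrow> 'y::finite \<Rightarrow> real) \<Rightarrow> ('x \<Rightarrow> real) \<Rightarrow> ('x \<Rightarrow> real) \<Rightarrow> real" where
  "innerP P f1 f2 = ExpX P (\<lambda>x. f1 x * f2 x)"

definition normP :: "('x::finite \<Rightarrow> 'y::finite \<Rightarrow> real) \<Rightarrow> ('x \<Rightarrow> real) \<Rightarrow> real" where
  "normP P f = sqrt (innerP P f f)"

definition projP :: "('x::finite \<Rightarrow> 'y::finite \<Rightarrow> real) \<Rightarrow> ('x \<Rightarrow> real) \<Rightarrow> ('x \<Rightarrow> real) set \<Rightarrow> ('x \<Rightarrow> real)" where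
  "projP P f G = (THE h. h \<in> G \<and> (\<forall>h'\<in>G. normP P (h - f) \<le> normP P (h' - f)))"

text \<open>A d-dimensional feature f = (f_1,...,f_d) is represented by the list of its components.
  Lambda_f = E[f(X) f(X)^T].\<close>
definition LambdaF :: "('x::finite \<Rightarrow> 'y::finite \<Rightarrow> real) \<Rightarrow> ('x \<Rightarrow> real) list \<Rightarrow> real mat" where
  "LambdaF P fs = mat (length fs) (length fs) (\<lambda>(i,j). ExpX P (\<lambda>x. (fs ! i) x * (fs ! j) x))"

text \<open>Inverse of Lambda_f (the zero matrix if singular; only used when nonsingular).\<close>
definition LambdaInv :: "('x::finite \<Rightarrow> 'y::finite \<Rightarrow> real) \<Rightarrow> ('x \<Rightarrow> real) list \<Rightarrow> real mat" where
  "LambdaInv P fs = (case mat_inverse (LambdaF P fs) of Some B \<Rightarrow> B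
                       | None \<Rightarrow> 0\<^sub>m (length fs) (length fs))"

definition condMean :: "('x::finite \<Rightarrow> 'y::finite \<Rightarrow> real) \<Rightarrow> ('x \<Rightarrow> real) list \<Rightarrow> 'y \<Rightarrow> real vec" where
  "condMean P fs y = vec (length fs) (\<lambda>i. condE P (\<lambda>x. (fs ! i) x - ExpX P (fs ! i)) y)"

text \<open>H-score: H(f) = 1/2 E[ || E[Lambda_f^(-1/2) f~(X) | Y] ||^2 ]
  = 1/2 E[ m(Y)^T Lambda_f^(-1) m(Y) ] with m(Y) = E[f~(X)|Y]
  (since Lambda_f^(-1/2) is symmetric with square Lambda_f^(-1)).\<close>
definition Hscore :: "('x::finite \<Rightarrow> 'y::finite \<Rightarrow> real) \<Rightarrow> ('x \<Rightarrow> real) list \<Rightarrow> real" where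
  "Hscore P fs = 1/2 * ExpY P (\<lambda>y. condMean P fs y \<bullet> (LambdaInv P fs *\<^sub>v condMean P fs y))"

text \<open>F_X as a real vector space: pointwise scaling (addition/zero from Function_Algebras).\<close>
definition scaleF :: "real \<Rightarrow> ('x \<Rightarrow> real) \<Rightarrow> ('x \<Rightarrow> real)" where
  "scaleF c f = (\<lambda>x. c * f x)"

abbreviation subspaceF :: "('x \<Rightarrow> real) set \<Rightarrow> bool" where
  "subspaceF \<equiv> module.subspace scaleF"

abbreviation spanF :: "('x \<Rightarrow> real) set \<Rightarrow> ('x \<Rightarrow> real) set" where
  "spanF \<equiv> module.span scaleF"

abbreviation independentF :: "('x \<Rightarrow> real) set \<Rightarrow> bool" where
  "independentF S \<equiv> \<not> module.dependent scaleF S"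

definition HscoreSub :: "('x::finite \<Rightarrow> 'y::finite \<Rightarrow> real) \<Rightarrow> ('x \<Rightarrow> real) set \<Rightarrow> real" where
  "HscoreSub P G = Hscore P (SOME bs. distinct bs \<and> independentF (set bs) \<and> spanF (set bs) = G)"

end

theory Submission imports Defs "Jordan_Normal_Form.Determinant" begin

lemma sumF_apply: "(\<Sum>i\<in>I. (F i :: 'x \<Rightarrow> real)) x = (\<Sum>i\<in>I. F i x)"
  by (induction I rule: infinite_finite_induct) (auto simp: zero_fun_def plus_fun_def)

lemma innerP_sum: "innerP P f g = (\<Sum>x\<in>UNIV. margX P x * (f x * g x))"
  by (simp add: innerP_def ExpX_def)

lemma innerP_sym: "innerP P f g = innerP P g f"
  by (simp add: innerP_sum mult.commute)

lemma innerP_add_left: "innerP P (f + g) k = innerP P f k + innerP P g k"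
  by (simp add: innerP_sum algebra_simps sum.distrib)

lemma innerP_diff_left: "innerP P (f - g) k = innerP P f k - innerP P g k"
  by (simp add: innerP_sum algebra_simps sum_subtractf)

lemma innerP_scale_left: "innerP P (scaleF c f) k = c * innerP P f k"
  by (simp add: innerP_sum scaleF_def sum_distrib_left algebra_simps)

lemma innerP_zero_left: "innerP P 0 k = 0"
  by (simp add: innerP_sum)

lemma innerP_zero_left': "innerP P (\<lambda>a. 0) k = 0"
  by (simp add: innerP_sum)

lemma innerP_add_left': "innerP P (\<lambda>a. f a + g a) k = innerP P f k + innerP P g k"
  by (simp add: innerP_sum algebra_simps sum.distrib)

lemma innerP_sum_left: "innerP P (\<Sum>i\<in>I. scaleF (c i) (g i)) k = (\<Sum>i\<in>I. c i * innerP P (g i) k)"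
  by (induction I rule: infinite_finite_induct)
     (simp_all add: innerP_zero_left innerP_add_left innerP_scale_left innerP_zero_left' innerP_add_left')

lemma innerP_nonneg: assumes "\<And>x. margX P x > 0" shows "innerP P f f \<ge> 0"
  unfolding innerP_sum using assms by (intro sum_nonneg) (simp add: less_imp_le)

lemma innerP_zero_iff: assumes pos: "\<And>x. margX P x > 0" and z: "innerP P f f = 0" shows "f = 0"
proof
  fix x
  have "\<forall>x\<in>UNIV. margX P x * (f x * f x) = 0"
    using z unfolding innerP_sum
    by (subst sum_nonneg_eq_0_iff[symmetric]) (auto simp: pos less_imp_le)
  then have "margX P x * (f x * f x) = 0" by blast
  then show "f x = 0 x" using pos[of x] by simp
qed

lemma vsF: "vector_space (scaleF :: real \<Rightarrow> ('x \<Rightarrow> real) \<Rightarrow> ('x \<Rightarrow> real))"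
  by unfold_locales (auto simp: scaleF_def plus_fun_def algebra_simps fun_eq_iff)

lemma fdF: "finite_dimensional_vector_space (scaleF :: real \<Rightarrow> ('x::finite \<Rightarrow> real) \<Rightarrow> _)
   (range (\<lambda>a::'x. \<lambda>x::'x. if x = a then (1::real) else 0))"
proof -
  interpret vector_space "scaleF :: real \<Rightarrow> ('x::finite \<Rightarrow> real) \<Rightarrow> _" by (rule vsF)
  let ?e = "\<lambda>a::'x. \<lambda>x::'x. if x = a then (1::real) else 0"
  show ?thesis
  proof unfold_locales
    show "finite (range ?e)" by simp
    show "independent (range ?e)"
      unfolding independent_explicit_module
    proof (intro allI impI)
      fix t u v assume t: "finite t" "t \<subseteq> range ?e" and s: "(\<Sum>v\<in>t. scaleF (u v) v) = 0" and v: "v \<in> t"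
      then obtain a where va: "v = ?e a" by auto
      have "0 = (\<Sum>w\<in>t. scaleF (u w) w) a" using s by simp
      also have "\<dots> = (\<Sum>w\<in>t. u w * w a)" by (simp add: sumF_apply scaleF_def)
      also have "\<dots> = (\<Sum>w\<in>t. if w = v then u v else 0)"
      proof (rule sum.cong)
        fix w assume "w \<in> t"
        then obtain b where wb: "w = ?e b" using t by auto
        show "u w * w a = (if w = v then u v else 0)"
        proof (cases "b = a")
          case True then show ?thesis using wb va by simp
        next
          case False
          then have "w \<noteq> v" using wb va by (auto simp: fun_eq_iff)
          then show ?thesis using wb False by simp
        qed
      qed simp
      also have "\<dots> = u v" using t v by simp
      finally show "u v = 0" by simp
    qed
    show "span (range ?e) = UNIV"
    proof -
      have "f \<in> span (range ?e)" for f :: "'x \<Rightarrow> real"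
      proof -
      have "f = (\<Sum>a\<in>UNIV. scaleF (f a) (?e a))"
        by (rule ext) (simp add: sumF_apply scaleF_def if_distrib cong: if_cong)
      also have "\<dots> \<in> span (range ?e)"
        by (intro span_sum span_scale span_base) auto
      finally show "f \<in> span (range ?e)" .
      qed
      then show ?thesis by auto
    qed
  qed
qed


lemma LambdaF_carrier: "LambdaF P fs \<in> carrier_mat (length fs) (length fs)"
  by (simp add: LambdaF_def)

lemma LambdaInv_carrier: "LambdaInv P fs \<in> carrier_mat (length fs) (length fs)"
  unfolding LambdaInv_def
  by (cases "mat_inverse (LambdaF P fs)") (auto dest: mat_inverse(2)[OF LambdaF_carrier])

lemma LambdaF_entry: "i < length fs \<Longrightarrow> j < length fs \<Longrightarrow> LambdaF P fs $$ (i,j) = innerP P (fs!i) (fs!j)"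
  by (simp add: LambdaF_def innerP_def)

lemma Hscore_formula:
  fixes P :: "'x::finite \<Rightarrow> 'y::finite \<Rightarrow> real"
  assumes decomp: "\<And>x y. P x y = margX P x * margY P y * (1 + \<rho> * fstar x * gstar y)"
    and sX: "(\<Sum>x\<in>UNIV. margX P x) = 1"
    and E0: "ExpX P fstar = 0"
    and gnorm: "ExpY P (\<lambda>y. (gstar y)\<^sup>2) = 1"
  shows "Hscore P fs = \<rho>\<^sup>2 / 2 * (vec (length fs) (\<lambda>i. innerP P fstar (fs!i)) \<bullet>
            (LambdaInv P fs *\<^sub>v vec (length fs) (\<lambda>i. innerP P fstar (fs!i))))"
proof -
  define n where "n = length fs"
  define a where "a = vec n (\<lambda>i. innerP P fstar (fs!i))"
  define L where "L = LambdaInv P fs"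
  define Q where "Q = a \<bullet> (L *\<^sub>v a)"
  have L: "L \<in> carrier_mat n n" unfolding L_def n_def by (rule LambdaInv_carrier)
  have a: "a \<in> carrier_vec n" unfolding a_def by simp
  have num: "(\<Sum>x\<in>UNIV. P x y * (f x - ExpX P f)) = margY P y * (\<rho> * gstar y * innerP P fstar f)"
    for y and f :: "'x \<Rightarrow> real"
  proof -
    have "(\<Sum>x\<in>UNIV. P x y * (f x - ExpX P f)) =
      (\<Sum>x\<in>UNIV. margY P y * (margX P x * f x)) - (\<Sum>x\<in>UNIV. margY P y * ExpX P f * margX P x)
      + (\<Sum>x\<in>UNIV. margY P y * (\<rho> * gstar y) * (margX P x * (fstar x * f x)))
      - (\<Sum>x\<in>UNIV. margY P y * (\<rho> * gstar y) * ExpX P f * (margX P x * fstar x))"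
      unfolding sum_subtractf[symmetric] sum.distrib[symmetric]
      by (rule sum.cong[OF refl]) (subst decomp; simp add: algebra_simps)
    also have "(\<Sum>x\<in>UNIV. margY P y * (margX P x * f x)) = margY P y * ExpX P f"
      by (simp add: ExpX_def sum_distrib_left)
    also have "(\<Sum>x\<in>UNIV. margY P y * ExpX P f * margX P x) = margY P y * ExpX P f"
      by (simp add: sX sum_distrib_left[symmetric])
    also have "(\<Sum>x\<in>UNIV. margY P y * (\<rho> * gstar y) * (margX P x * (fstar x * f x)))
       = margY P y * (\<rho> * gstar y * innerP P fstar f)"
      by (simp add: innerP_sum sum_distrib_left[symmetric])
    also have "(\<Sum>x\<in>UNIV. margY P y * (\<rho> * gstar y) * ExpX P f * (margX P x * fstar x)) = 0"
      using E0 by (simp add: ExpX_def sum_distrib_left[symmetric])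
    finally show ?thesis by simp
  qed
  have cm: "condMean P fs y = (margY P y * (\<rho> * gstar y) / margY P y) \<cdot>\<^sub>v a" for y
    unfolding condMean_def a_def n_def by (rule eq_vecI) (simp_all add: condE_def num)
  have trm: "margY P y * (condMean P fs y \<bullet> (L *\<^sub>v condMean P fs y)) = \<rho>\<^sup>2 * (margY P y * (gstar y)\<^sup>2) * Q" for y
  proof -
    define t where "t = margY P y * (\<rho> * gstar y) / margY P y"
    have "condMean P fs y \<bullet> (L *\<^sub>v condMean P fs y) = t * (t * Q)"
      using L a by (simp add: cm t_def[symmetric] mult_mat_vec[OF L a] Q_def)
    moreover have "margY P y * (t*t) = \<rho>\<^sup>2 * (margY P y * (gstar y)\<^sup>2)"
      by (cases "margY P y = 0") (auto simp: t_def power2_eq_square)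
    ultimately show ?thesis by (metis mult.assoc)
  qed
  have "Hscore P fs = 1/2 * (\<Sum>y\<in>UNIV. margY P y * (condMean P fs y \<bullet> (L *\<^sub>v condMean P fs y)))"
    unfolding Hscore_def ExpY_def L_def by simp
  also have "\<dots> = 1/2 * (\<Sum>y\<in>UNIV. \<rho>\<^sup>2 * (margY P y * (gstar y)\<^sup>2) * Q)"
    by (simp only: trm)
  also have "(\<Sum>y\<in>UNIV. \<rho>\<^sup>2 * (margY P y * (gstar y)\<^sup>2) * Q) = \<rho>\<^sup>2 * Q * ExpY P (\<lambda>y. (gstar y)\<^sup>2)"
    by (simp add: ExpY_def sum_distrib_left sum_distrib_right algebra_simps)
  finally show ?thesis using gnorm by (simp add: Q_def a_def L_def n_def)
qed

lemma gram_inv: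
  fixes P :: "'x::finite \<Rightarrow> 'y::finite \<Rightarrow> real"
  assumes pos: "\<And>x. margX P x > 0"
    and indep: "\<And>c. (\<Sum>i<length fs. scaleF (c i) (fs!i)) = 0 \<Longrightarrow> \<forall>i<length fs. c i = 0"
  shows "LambdaF P fs * LambdaInv P fs = 1\<^sub>m (length fs) \<and> LambdaInv P fs * LambdaF P fs = 1\<^sub>m (length fs)"
proof -
  define n where "n = length fs"
  define A where "A = LambdaF P fs"
  have A: "A \<in> carrier_mat n n" unfolding A_def n_def by (rule LambdaF_carrier)
  have "det A \<noteq> 0"
  proof
    assume "det A = 0"
    then obtain v where v: "v \<in> carrier_vec n" "v \<noteq> 0\<^sub>v n" "A *\<^sub>v v = 0\<^sub>v n"
      using det_0_iff_vec_prod_zero[OF A] by auto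
    define w where "w = (\<Sum>i<n. scaleF (v$i) (fs!i))"
    have Av: "(A *\<^sub>v v) $ j = innerP P (fs!j) w" if j: "j < n" for j
    proof -
      have "(A *\<^sub>v v) $ j = (\<Sum>k\<in>{0..<n}. A $$ (j,k) * v $ k)"
        using A v(1) j by (simp add: scalar_prod_def)
      also have "\<dots> = (\<Sum>k<n. v$k * innerP P (fs!k) (fs!j))"
        using j by (auto simp: A_def n_def LambdaF_entry innerP_sym lessThan_atLeast0 intro!: sum.cong)
      also have "\<dots> = innerP P w (fs!j)" unfolding w_def by (simp add: innerP_sum_left)
      finally show ?thesis by (simp add: innerP_sym)
    qed
    have "innerP P w w = (\<Sum>j<n. v$j * innerP P (fs!j) w)"
      unfolding w_def[of] by (simp add: innerP_sum_left w_def)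
    also have "\<dots> = 0" using Av v(3) by simp
    finally have "w = 0" using innerP_zero_iff[OF pos] by blast
    then have "\<forall>i<n. v$i = 0" using indep[of "\<lambda>i. v$i"] unfolding w_def n_def by blast
    then have "v = 0\<^sub>v n" using v(1) by auto
    then show False using v(2) by simp
  qed
  then have "A \<in> Units (ring_mat TYPE(real) n undefined)" by (rule det_non_zero_imp_unit[OF A])
  then obtain B where B: "mat_inverse A = Some B"
    using mat_inverse(1)[OF A] by (metis option.exhaust)
  then show ?thesis using mat_inverse(2)[OF A B] by (simp add: LambdaInv_def A_def n_def)
qed

lemma innerP_CS:
  assumes pos: "\<And>x. margX P x > 0"
  shows "(innerP P u v)\<^sup>2 \<le> innerP P u u * innerP P v v"
proof (cases "innerP P v v = 0")
  case True
  then have "v = 0" using innerP_zero_iff[OF pos] by blast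
  then show ?thesis using innerP_nonneg[OF pos, of u] by (simp add: innerP_sym[of P u 0] innerP_zero_left)
next
  case False
  then have vv: "innerP P v v > 0" using innerP_nonneg[OF pos, of v] by linarith
  define w where "w = scaleF (innerP P v v) u - scaleF (innerP P u v) v"
  have "0 \<le> innerP P w w" by (rule innerP_nonneg[OF pos])
  have wv: "innerP P w v = innerP P v v * innerP P u v - innerP P u v * innerP P v v"
    unfolding w_def by (simp only: innerP_diff_left innerP_scale_left)
  have wu: "innerP P w u = innerP P v v * innerP P u u - innerP P u v * innerP P u v"
    unfolding w_def by (simp only: innerP_diff_left innerP_scale_left innerP_sym[of P v u])
  have "innerP P w w = innerP P v v * innerP P u w - innerP P u v * innerP P v w"
    by (subst (1) w_def) (simp only: innerP_diff_left innerP_scale_left)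
  also have "\<dots> = innerP P v v * innerP P w u - innerP P u v * innerP P w v"
    by (simp only: innerP_sym[of P u w] innerP_sym[of P v w])
  also have "\<dots> = innerP P v v * (innerP P u u * innerP P v v - (innerP P u v)\<^sup>2)"
    unfolding wu wv by (simp add: algebra_simps power2_eq_square)
  finally have "0 \<le> innerP P v v * (innerP P u u * innerP P v v - (innerP P u v)\<^sup>2)"
    using \<open>0 \<le> innerP P w w\<close> by simp
  then show ?thesis using vv by (simp add: zero_le_mult_iff)
qed


lemma one_dim:
  fixes P :: "'x::finite \<Rightarrow> 'y::finite \<Rightarrow> real"
  assumes pos: "\<And>x. margX P x > 0"
    and decomp: "\<And>x y. P x y = margX P x * margY P y * (1 + \<rho> * fstar x * gstar y)"
    and sX: "(\<Sum>x\<in>UNIV. margX P x) = 1"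
    and E0: "ExpX P fstar = 0"
    and gnorm: "ExpY P (\<lambda>y. (gstar y)\<^sup>2) = 1"
    and f: "f \<noteq> 0"
  shows "Hscore P [f] = \<rho>\<^sup>2 / 2 * ((innerP P fstar f)\<^sup>2 / innerP P f f)"
proof -
  have ff: "innerP P f f > 0"
    using innerP_nonneg[OF pos, of f] innerP_zero_iff[OF pos, of f] f by linarith
  have ind: "\<forall>i<length [f]. c i = 0" if "(\<Sum>i<length [f]. scaleF (c i) ([f]!i)) = 0" for c
  proof -
    have "scaleF (c 0) f = 0" using that by simp
    then have "\<forall>x. c 0 * f x = 0" by (auto simp: scaleF_def fun_eq_iff)
    then have "c 0 = 0" using f by (auto simp: fun_eq_iff)
    then show ?thesis by simp
  qed
  define L where "L = LambdaInv P [f]"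
  have L: "L \<in> carrier_mat 1 1" unfolding L_def using LambdaInv_carrier[of P "[f]"] by simp
  have "L * LambdaF P [f] = 1\<^sub>m 1" using gram_inv[OF pos ind] unfolding L_def by simp
  then have "(L * LambdaF P [f]) $$ (0,0) = 1" by simp
  then have "L $$ (0,0) * innerP P f f = 1"
    using L by (simp add: scalar_prod_def LambdaF_def innerP_def)
  then have L00: "L $$ (0,0) = 1 / innerP P f f" using ff by (simp add: field_simps)
  have "Hscore P [f] = \<rho>\<^sup>2 / 2 * (vec 1 (\<lambda>i. innerP P fstar ([f]!i)) \<bullet> (L *\<^sub>v vec 1 (\<lambda>i. innerP P fstar ([f]!i))))"
    using Hscore_formula[OF decomp sX E0 gnorm, of "[f]"] unfolding L_def by simp
  also have "vec 1 (\<lambda>i. innerP P fstar ([f]!i)) \<bullet> (L *\<^sub>v vec 1 (\<lambda>i. innerP P fstar ([f]!i)))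
     = innerP P fstar f * (L $$ (0,0) * innerP P fstar f)"
    using L by (simp add: scalar_prod_def)
  finally show ?thesis using L00 by (simp add: power2_eq_square)
qed

lemma Hscore_zero:
  fixes P :: "'x::finite \<Rightarrow> 'y::finite \<Rightarrow> real"
  assumes decomp: "\<And>x y. P x y = margX P x * margY P y * (1 + \<rho> * fstar x * gstar y)"
    and sX: "(\<Sum>x\<in>UNIV. margX P x) = 1"
    and E0: "ExpX P fstar = 0"
    and gnorm: "ExpY P (\<lambda>y. (gstar y)\<^sup>2) = 1"
  shows "Hscore P [0] = 0"
proof -
  have z: "innerP P fstar 0 = 0" by (simp add: innerP_sum)
  show ?thesis using Hscore_formula[OF decomp sX E0 gnorm, of "[0]"]
    by (simp add: z scalar_prod_def)
qed

lemma pyth_gen: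
  assumes o: "innerP P u v = 0"
  shows "innerP P (u + v) (u + v) = innerP P u u + innerP P v v"
proof -
  have "innerP P (u + v) (u + v) = innerP P u (u + v) + innerP P v (u + v)" by (rule innerP_add_left)
  also have "innerP P u (u + v) = innerP P u u + innerP P v u"
    by (simp only: innerP_sym[of P u "u + v"] innerP_add_left)
  also have "innerP P v (u + v) = innerP P u v + innerP P v v"
    by (simp only: innerP_sym[of P v "u + v"] innerP_add_left)
  finally show ?thesis using o innerP_sym[of P v u] by linarith
qed

lemma mF: "Modules.module (scaleF :: real \<Rightarrow> ('x \<Rightarrow> real) \<Rightarrow> ('x \<Rightarrow> real))"
  by unfold_locales (auto simp: scaleF_def plus_fun_def algebra_simps fun_eq_iff)

lemma basis_ex:
  assumes sub: "subspaceF (G :: ('x::finite \<Rightarrow> real) set)"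
  shows "\<exists>bs. distinct bs \<and> independentF (set bs) \<and> spanF (set bs) = G"
proof -
  interpret V: vector_space "scaleF :: real \<Rightarrow> ('x \<Rightarrow> real) \<Rightarrow> _" by (rule vsF)
  interpret FD: finite_dimensional_vector_space "scaleF :: real \<Rightarrow> ('x \<Rightarrow> real) \<Rightarrow> _"
    "range (\<lambda>a::'x. \<lambda>x::'x. if x = a then (1::real) else 0)" by (rule fdF)
  obtain B where B: "B \<subseteq> G" "V.independent B" "G \<subseteq> V.span B"
    using V.basis_exists by metis
  have finB: "finite B" using FD.finiteI_independent[OF B(2)] .
  have spanB: "V.span B = G" using V.span_subspace[OF B(1) B(3) sub] .
  obtain xs where xs: "set xs = B" "distinct xs" using finite_distinct_list[OF finB] by blast
  show ?thesis using xs B(2) spanB by blast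
qed

theorem proposition3:
  fixes P :: "'x::finite \<Rightarrow> 'y::finite \<Rightarrow> real"
    and \<rho> :: real and fstar :: "'x \<Rightarrow> real" and gstar :: "'y \<Rightarrow> real"
    and G :: "('x \<Rightarrow> real) set"
  assumes two: "CARD('y) = 2"
    and nonneg: "\<And>x y. P x y \<ge> 0"
    and total: "(\<Sum>x\<in>UNIV. \<Sum>y\<in>UNIV. P x y) = 1"
    and suppX: "\<And>x. margX P x > 0"
    and dep: "\<not> (\<forall>x y. P x y = margX P x * margY P y)"
    and rho_pos: "\<rho> > 0"
    and decomp: "\<And>x y. P x y = margX P x * margY P y * (1 + \<rho> * fstar x * gstar y)"
    and fnorm: "ExpX P (\<lambda>x. (fstar x)\<^sup>2) = 1"
    and gnorm: "ExpY P (\<lambda>y. (gstar y)\<^sup>2) = 1"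
    and sub: "subspaceF G"
    and nontriv: "G \<noteq> {0}"
  shows "HscoreSub P G = \<rho>\<^sup>2 / 2 * (normP P (projP P fstar G))\<^sup>2
       \<and> (\<forall>f\<in>G - {0}. Hscore P [f] \<le> HscoreSub P G)
       \<and> (\<exists>f\<in>G - {0}. Hscore P [f] = HscoreSub P G)
       \<and> HscoreSub P G = Hscore P [projP P fstar G]"
proof -
  have sX: "(\<Sum>x\<in>UNIV. margX P x) = 1" using total by (simp add: margX_def)
  have E0: "ExpX P fstar = 0"
  proof -
    have h1: "margY P y * (\<rho> * gstar y * ExpX P fstar) = 0" for y
    proof -
      have "margY P y = (\<Sum>x\<in>UNIV. P x y)" by (simp add: margY_def)
      also have "\<dots> = (\<Sum>x\<in>UNIV. margY P y * margX P x + margY P y * (\<rho> * gstar y) * (margX P x * fstar x))"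
        by (rule sum.cong[OF refl]) (subst decomp; simp add: algebra_simps)
      also have "\<dots> = margY P y * (\<Sum>x\<in>UNIV. margX P x) + margY P y * (\<rho> * gstar y) * ExpX P fstar"
        by (simp add: sum.distrib sum_distrib_left ExpX_def)
      finally show ?thesis using sX by simp
    qed
    have h2: "margY P y * (gstar y)\<^sup>2 * ExpX P fstar = 0" for y
    proof -
      have "margY P y * gstar y * ExpX P fstar = 0" using h1[of y] rho_pos by simp
      then show ?thesis by (simp add: power2_eq_square)
    qed
    have "ExpX P fstar = ExpX P fstar * ExpY P (\<lambda>y. (gstar y)\<^sup>2)" using gnorm by simp
    also have "\<dots> = (\<Sum>y\<in>UNIV. margY P y * (gstar y)\<^sup>2 * ExpX P fstar)"
      by (simp add: ExpY_def sum_distrib_left sum_distrib_right algebra_simps)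
    also have "\<dots> = 0" by (simp only: h2 sum.neutral_const)
    finally show ?thesis .
  qed
  have ex: "\<exists>bs. distinct bs \<and> independentF (set bs) \<and> spanF (set bs) = G"
    by (rule basis_ex[OF sub])
  define bs where "bs = (SOME bs. distinct bs \<and> independentF (set bs) \<and> spanF (set bs) = G)"
  have bs: "distinct bs" "independentF (set bs)" "spanF (set bs) = G"
    using someI_ex[OF ex] unfolding bs_def by auto
  have HS: "HscoreSub P G = Hscore P bs" unfolding HscoreSub_def bs_def ..
  define n where "n = length bs"
  have setbs: "set bs = (\<lambda>i. bs!i) ` {..<n}" unfolding n_def
    by (auto simp: in_set_conv_nth image_iff)
  have injbs: "inj_on (\<lambda>i. bs!i) {..<n}" using inj_on_nth[OF bs(1)] unfolding n_def by auto
  have indep: "\<forall>i<length bs. c i = 0" if c: "(\<Sum>i<length bs. scaleF (c i) (bs!i)) = 0" for c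
  proof (intro allI impI)
    fix i assume i: "i < length bs"
    define u where "u = (\<lambda>v. c (the_inv_into {..<n} (\<lambda>i. bs!i) v))"
    have uc: "u (bs!k) = c k" if "k < n" for k
      unfolding u_def using the_inv_into_f_f[OF injbs] that by simp
    have "(\<Sum>v\<in>set bs. scaleF (u v) v) = (\<Sum>k<n. scaleF (u (bs!k)) (bs!k))"
      unfolding setbs by (rule sum.reindex[OF injbs, unfolded comp_def])
    also have "\<dots> = (\<Sum>k<n. scaleF (c k) (bs!k))" by (rule sum.cong) (auto simp: uc)
    also have "\<dots> = 0" using c unfolding n_def .
    finally have "u (bs!i) = 0"
      using Modules.module.independentD[OF mF bs(2) finite_set order_refl] i by auto
    then show "c i = 0" using uc i unfolding n_def by simp
  qed
  define a where "a = vec n (\<lambda>i. innerP P fstar (bs!i))"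
  define L where "L = LambdaInv P bs"
  define A where "A = LambdaF P bs"
  define c where "c = L *\<^sub>v a"
  define h where "h = (\<Sum>i<n. scaleF (c$i) (bs!i))"
  have A: "A \<in> carrier_mat n n" unfolding A_def n_def by (rule LambdaF_carrier)
  have L: "L \<in> carrier_mat n n" unfolding L_def n_def by (rule LambdaInv_carrier)
  have a: "a \<in> carrier_vec n" unfolding a_def by simp
  have c: "c \<in> carrier_vec n" unfolding c_def using L a by simp
  have AL: "A * L = 1\<^sub>m n" using gram_inv[OF suppX indep] unfolding A_def L_def n_def by simp
  have Ac: "A *\<^sub>v c = a" unfolding c_def assoc_mult_mat_vec[OF A L a, symmetric] AL
    using a by simp
  have hG: "h \<in> G" unfolding h_def bs(3)[symmetric]
    by (intro Modules.module.span_sum[OF mF] Modules.module.span_scale[OF mF] Modules.module.span_base[OF mF]) (auto simp: n_def)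
  have hb: "innerP P h (bs!j) = innerP P fstar (bs!j)" if j: "j < n" for j
  proof -
    have "innerP P h (bs!j) = (\<Sum>k<n. c$k * innerP P (bs!k) (bs!j))"
      unfolding h_def by (rule innerP_sum_left)
    also have "\<dots> = (\<Sum>k\<in>{0..<n}. A $$ (j,k) * c $ k)"
      using j by (auto simp: A_def n_def LambdaF_entry innerP_sym lessThan_atLeast0 intro!: sum.cong)
    also have "\<dots> = (A *\<^sub>v c) $ j" using A c j by (simp add: scalar_prod_def)
    also have "\<dots> = innerP P fstar (bs!j)" using j by (simp add: Ac a_def)
    finally show ?thesis .
  qed
  define S where "S = {g. innerP P g (h - fstar) = 0}"
  have subS: "subspaceF S"
    unfolding S_def
    by (rule Modules.module.subspaceI[OF mF]) (simp_all add: innerP_zero_left innerP_add_left innerP_scale_left)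
  have bsS: "set bs \<subseteq> S"
  proof
    fix g assume "g \<in> set bs"
    then obtain j where j: "j < n" "g = bs!j" unfolding setbs by auto
    have "innerP P g (h - fstar) = innerP P h g - innerP P fstar g"
      by (simp add: innerP_sym[of P g] innerP_diff_left)
    then show "g \<in> S" using hb j unfolding S_def by simp
  qed
  have orth: "innerP P g (h - fstar) = 0" if "g \<in> G" for g
    using Modules.module.span_minimal[OF mF bsS subS] that bs(3) unfolding S_def by auto
  have orth2: "innerP P g h = innerP P g fstar" if "g \<in> G" for g
    using orth[OF that] by (simp add: innerP_sym[of P g] innerP_diff_left)
  have pyth: "innerP P (h' - fstar) (h' - fstar) = innerP P (h' - h) (h' - h) + innerP P (h - fstar) (h - fstar)"
    if h': "h' \<in> G" for h'
  proof -
    have d: "h' - h \<in> G" using Modules.module.subspace_diff[OF mF sub h' hG] .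
    have o: "innerP P (h' - h) (h - fstar) = 0" using orth[OF d] .
    have e: "h' - fstar = (h' - h) + (h - fstar)" by simp
    show ?thesis using pyth_gen[OF o] by (simp only: e[symmetric])
  qed
  have proj: "projP P fstar G = h"
    unfolding projP_def
  proof (rule the_equality)
    have "normP P (h - fstar) \<le> normP P (h' - fstar)" if h': "h' \<in> G" for h'
      unfolding normP_def
      using pyth[OF h'] innerP_nonneg[OF suppX, of "h' - h"] by (intro real_sqrt_le_mono) linarith
    then show "h \<in> G \<and> (\<forall>h'\<in>G. normP P (h - fstar) \<le> normP P (h' - fstar))"
      using hG by blast
  next
    fix h2 assume h2: "h2 \<in> G \<and> (\<forall>h'\<in>G. normP P (h2 - fstar) \<le> normP P (h' - fstar))"
    then have "normP P (h2 - fstar) \<le> normP P (h - fstar)" using hG by blast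
    then have "innerP P (h2 - fstar) (h2 - fstar) \<le> innerP P (h - fstar) (h - fstar)"
      unfolding normP_def by (simp only: real_sqrt_le_iff)
    then have "innerP P (h2 - h) (h2 - h) \<le> 0" using pyth[OF conjunct1[OF h2]] by linarith
    then have "innerP P (h2 - h) (h2 - h) = 0" using innerP_nonneg[OF suppX, of "h2 - h"] by linarith
    then have "h2 - h = 0" by (rule innerP_zero_iff[OF suppX])
    then show "h2 = h" by simp
  qed
  have hh: "innerP P h h = a \<bullet> c"
  proof -
    have "innerP P h h = (\<Sum>k<n. c$k * innerP P (bs!k) h)"
      unfolding h_def by (rule innerP_sum_left)
    also have "\<dots> = (\<Sum>k\<in>{0..<n}. a $ k * c $ k)"
      by (auto simp: innerP_sym[of P _ h] hb a_def lessThan_atLeast0 innerP_sym[of P fstar] intro!: sum.cong)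
    also have "\<dots> = a \<bullet> c" using c by (simp add: scalar_prod_def)
    finally show ?thesis .
  qed
  have Hbs: "Hscore P bs = \<rho>\<^sup>2 / 2 * innerP P h h"
    using Hscore_formula[OF decomp sX E0 gnorm, of bs] unfolding hh c_def L_def a_def n_def by simp
  have nh: "(normP P h)\<^sup>2 = innerP P h h" unfolding normP_def
    using innerP_nonneg[OF suppX, of h] by simp
  have c1: "HscoreSub P G = \<rho>\<^sup>2 / 2 * (normP P (projP P fstar G))\<^sup>2"
    unfolding HS Hbs proj nh ..
  have onef: "Hscore P [f] = \<rho>\<^sup>2 / 2 * ((innerP P h f)\<^sup>2 / innerP P f f)" if f: "f \<in> G - {0}" for f
  proof -
    have "innerP P fstar f = innerP P h f"
      using orth2[of f] f by (simp add: innerP_sym[of P _ f])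
    then show ?thesis using one_dim[OF suppX decomp sX E0 gnorm, of f] f by simp
  qed
  have c2: "\<forall>f\<in>G - {0}. Hscore P [f] \<le> HscoreSub P G"
  proof
    fix f assume f: "f \<in> G - {0}"
    have ff: "innerP P f f > 0"
      using innerP_nonneg[OF suppX, of f] innerP_zero_iff[OF suppX, of f] f by force
    have "(innerP P h f)\<^sup>2 / innerP P f f \<le> innerP P h h"
      using innerP_CS[OF suppX, of h f] ff by (simp add: divide_le_eq)
    then show "Hscore P [f] \<le> HscoreSub P G"
      unfolding onef[OF f] HS Hbs using rho_pos by (intro mult_left_mono) auto
  qed
  have c34: "(\<exists>f\<in>G - {0}. Hscore P [f] = HscoreSub P G) \<and> HscoreSub P G = Hscore P [projP P fstar G]"
  proof (cases "h = 0")
    case True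
    obtain f where f: "f \<in> G" "f \<noteq> 0" using nontriv Modules.module.subspace_0[OF mF sub] by blast
    have "Hscore P [f] = 0" using onef[of f] f True by (simp add: innerP_zero_left)
    moreover have "HscoreSub P G = 0" unfolding HS Hbs True by (simp add: innerP_zero_left)
    moreover have "Hscore P [projP P fstar G] = 0"
      unfolding proj True by (rule Hscore_zero[OF decomp sX E0 gnorm])
    ultimately show ?thesis using f by auto
  next
    case False
    have hh0: "innerP P h h > 0"
      using innerP_nonneg[OF suppX, of h] innerP_zero_iff[OF suppX, of h] False by force
    have "Hscore P [h] = HscoreSub P G"
      using onef[of h] hG False hh0 unfolding HS Hbs by (simp add: power2_eq_square)
    then show ?thesis using hG False proj by auto
  qed
  show ?thesis using c1 c2 c34 by blast
qed

end
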